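(* Let $Q$ be an automorphic loop of nilpotency class $3$, and let $a,b,c,d\in Q$. (i) If $(a,c,d),(b,c,d)\in Z(Q)$ then $(ab,c,d)=(a,c,d)(b,c,d)$. (ii) If $(a,b,d),(a,c,d)\in Z(Q)$ then $(a,bc,d)=(a,b,d)(a,c,d)$. (iii) If $(a,b,c),(a,b,d)\in Z(Q)$ then $(a,b,cd)=(a,b,c)(a,b,d)$.
   Context: A loop is a set with a binary operation such that all left and right translations $L_a:b\mapsto ab$, $R_a:b\mapsto ba$ are bijections and there is a two-sided identity $1$. The inner mapping group is the stabilizer of $1$ in the group generated by all translations; $Q$ is automorphic if all inner mappings are automorphisms. The associator $(a,b,c)$ is defined by $(ab)c=(a(bc))(a,b,c)$. The center $Z(Q)$ is the set of elements fixed by all inner mappings; $Z_0=1$, $Z_{i+1}(Q)$ is the preimage of $Z(Q/Z_i(Q))$, and $Q$ has nilpotency class $n$ if $Z_{n-1}(Q)\neq Q=Z_n(Q)$. *)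

theory Defs
  imports Main
begin

definition loop :: "'a set \<Rightarrow> ('a \<Rightarrow> 'a \<Rightarrow> 'a) \<Rightarrow> 'a \<Rightarrow> bool" where
  "loop G m e \<longleftrightarrow> e \<in> G \<and> (\<forall>x\<in>G. \<forall>y\<in>G. m x y \<in> G)
     \<and> (\<forall>x\<in>G. m e x = x \<and> m x e = x)
     \<and> (\<forall>a\<in>G. bij_betw (m a) G G \<and> bij_betw (\<lambda>x. m x a) G G)"

definition ltrans :: "'a set \<Rightarrow> ('a \<Rightarrow> 'a \<Rightarrow> 'a) \<Rightarrow> 'a \<Rightarrow> 'a \<Rightarrow> 'a" where
  "ltrans G m a = (\<lambda>x. if x \<in> G then m a x else x)"

definition rtrans :: "'a set \<Rightarrow> ('a \<Rightarrow> 'a \<Rightarrow> 'a) \<Rightarrow> 'a \<Rightarrow> 'a \<Rightarrow> 'a" where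
  "rtrans G m a = (\<lambda>x. if x \<in> G then m x a else x)"

definition ltrans_inv :: "'a set \<Rightarrow> ('a \<Rightarrow> 'a \<Rightarrow> 'a) \<Rightarrow> 'a \<Rightarrow> 'a \<Rightarrow> 'a" where
  "ltrans_inv G m a = (\<lambda>x. if x \<in> G then inv_into G (m a) x else x)"

definition rtrans_inv :: "'a set \<Rightarrow> ('a \<Rightarrow> 'a \<Rightarrow> 'a) \<Rightarrow> 'a \<Rightarrow> 'a \<Rightarrow> 'a" where
  "rtrans_inv G m a = (\<lambda>x. if x \<in> G then inv_into G (\<lambda>y. m y a) x else x)"

inductive_set mlt :: "'a set \<Rightarrow> ('a \<Rightarrow> 'a \<Rightarrow> 'a) \<Rightarrow> ('a \<Rightarrow> 'a) set"
  for G m where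
  mlt_id: "id \<in> mlt G m"
| mlt_L: "f \<in> mlt G m \<Longrightarrow> a \<in> G \<Longrightarrow> ltrans G m a \<circ> f \<in> mlt G m"
| mlt_R: "f \<in> mlt G m \<Longrightarrow> a \<in> G \<Longrightarrow> rtrans G m a \<circ> f \<in> mlt G m"
| mlt_Li: "f \<in> mlt G m \<Longrightarrow> a \<in> G \<Longrightarrow> ltrans_inv G m a \<circ> f \<in> mlt G m"
| mlt_Ri: "f \<in> mlt G m \<Longrightarrow> a \<in> G \<Longrightarrow> rtrans_inv G m a \<circ> f \<in> mlt G m"

definition inn :: "'a set \<Rightarrow> ('a \<Rightarrow> 'a \<Rightarrow> 'a) \<Rightarrow> 'a \<Rightarrow> ('a \<Rightarrow> 'a) set" where
  "inn G m e = {f \<in> mlt G m. f e = e}"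

definition automorphic :: "'a set \<Rightarrow> ('a \<Rightarrow> 'a \<Rightarrow> 'a) \<Rightarrow> 'a \<Rightarrow> bool" where
  "automorphic G m e \<longleftrightarrow> (\<forall>f\<in>inn G m e. \<forall>x\<in>G. \<forall>y\<in>G. f (m x y) = m (f x) (f y))"

definition center :: "'a set \<Rightarrow> ('a \<Rightarrow> 'a \<Rightarrow> 'a) \<Rightarrow> 'a \<Rightarrow> 'a set" where
  "center G m e = {x \<in> G. \<forall>f\<in>inn G m e. f x = x}"

definition lcoset :: "('a \<Rightarrow> 'a \<Rightarrow> 'a) \<Rightarrow> 'a \<Rightarrow> 'a set \<Rightarrow> 'a set" where
  "lcoset m x N = (\<lambda>n. m x n) ` N"

definition qmult :: "('a \<Rightarrow> 'a \<Rightarrow> 'a) \<Rightarrow> 'a set \<Rightarrow> 'a set \<Rightarrow> 'a set \<Rightarrow> 'a set" where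
  "qmult m N A B = lcoset m (m (SOME a. a \<in> A) (SOME b. b \<in> B)) N"

fun upper_center :: "'a set \<Rightarrow> ('a \<Rightarrow> 'a \<Rightarrow> 'a) \<Rightarrow> 'a \<Rightarrow> nat \<Rightarrow> 'a set" where
  "upper_center G m e 0 = {e}"
| "upper_center G m e (Suc i) =
     (let N = upper_center G m e i in
      {x \<in> G. lcoset m x N \<in>
         center ((\<lambda>y. lcoset m y N) ` G) (qmult m N) (lcoset m e N)})"

definition nilpotency_class :: "'a set \<Rightarrow> ('a \<Rightarrow> 'a \<Rightarrow> 'a) \<Rightarrow> 'a \<Rightarrow> nat \<Rightarrow> bool" where
  "nilpotency_class G m e n \<longleftrightarrow>
     upper_center G m e n = G \<and> (n = 0 \<or> upper_center G m e (n - 1) \<noteq> G)"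

definition associator :: "'a set \<Rightarrow> ('a \<Rightarrow> 'a \<Rightarrow> 'a) \<Rightarrow> 'a \<Rightarrow> 'a \<Rightarrow> 'a \<Rightarrow> 'a" where
  "associator G m a b c = (THE t. t \<in> G \<and> m (m a b) c = m (m a (m b c)) t)"

end

theory Submission
  imports Defs
begin

locale lp =
  fixes G :: "'a set" and m :: "'a \<Rightarrow> 'a \<Rightarrow> 'a" and e :: 'a
  assumes L: "loop G m e"
begin

definition ldiv where "ldiv a x = inv_into G (m a) x"
definition rdiv where "rdiv x a = inv_into G (\<lambda>y. m y a) x"

lemma cl[simp]: "x \<in> G \<Longrightarrow> y \<in> G \<Longrightarrow> m x y \<in> G" using L unfolding loop_def by blast
lemma eG[simp]: "e \<in> G" using L unfolding loop_def by blast
lemma lid[simp]: "x \<in> G \<Longrightarrow> m e x = x" using L unfolding loop_def by blast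
lemma rid[simp]: "x \<in> G \<Longrightarrow> m x e = x" using L unfolding loop_def by blast
lemma bl: "a \<in> G \<Longrightarrow> bij_betw (m a) G G" using L unfolding loop_def by blast
lemma br: "a \<in> G \<Longrightarrow> bij_betw (\<lambda>x. m x a) G G" using L unfolding loop_def by blast

lemma ldiv_in[simp]: "a \<in> G \<Longrightarrow> x \<in> G \<Longrightarrow> ldiv a x \<in> G"
  unfolding ldiv_def by (metis bij_betw_def bl inv_into_into)
lemma ldiv_r[simp]: "a \<in> G \<Longrightarrow> x \<in> G \<Longrightarrow> m a (ldiv a x) = x"
  unfolding ldiv_def by (metis bij_betw_def bl f_inv_into_f)
lemma ldiv_l[simp]: "a \<in> G \<Longrightarrow> x \<in> G \<Longrightarrow> ldiv a (m a x) = x"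
  unfolding ldiv_def by (meson bij_betw_def bl inv_into_f_f)
lemma rdiv_in[simp]: "a \<in> G \<Longrightarrow> x \<in> G \<Longrightarrow> rdiv x a \<in> G"
  unfolding rdiv_def by (metis bij_betw_def br inv_into_into)
lemma rdiv_r[simp]: "a \<in> G \<Longrightarrow> x \<in> G \<Longrightarrow> m (rdiv x a) a = x"
  unfolding rdiv_def using f_inv_into_f[of x "\<lambda>y. m y a" G] br[of a] by (simp add: bij_betw_def)
lemma rdiv_l[simp]: "a \<in> G \<Longrightarrow> x \<in> G \<Longrightarrow> rdiv (m x a) a = x"
  unfolding rdiv_def using inv_into_f_f[of "\<lambda>y. m y a" G x] br[of a] by (simp add: bij_betw_def)

lemma ldiv_self[simp]: "a \<in> G \<Longrightarrow> ldiv a a = e" by (metis rid ldiv_l eG)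
lemma rdiv_self[simp]: "a \<in> G \<Longrightarrow> rdiv a a = e" by (metis lid rdiv_l eG)

lemma lcanc: "a \<in> G \<Longrightarrow> x \<in> G \<Longrightarrow> y \<in> G \<Longrightarrow> m a x = m a y \<Longrightarrow> x = y"
  by (metis ldiv_l)
lemma rcanc: "a \<in> G \<Longrightarrow> x \<in> G \<Longrightarrow> y \<in> G \<Longrightarrow> m x a = m y a \<Longrightarrow> x = y"
  by (metis rdiv_l)

lemma lt[simp]: "ltrans G m a x = (if x \<in> G then m a x else x)" by (simp add: ltrans_def)
lemma rt[simp]: "rtrans G m a x = (if x \<in> G then m x a else x)" by (simp add: rtrans_def)
lemma lti[simp]: "ltrans_inv G m a x = (if x \<in> G then ldiv a x else x)" by (simp add: ltrans_inv_def ldiv_def)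
lemma rti[simp]: "rtrans_inv G m a x = (if x \<in> G then rdiv x a else x)" by (simp add: rtrans_inv_def rdiv_def)

lemma assoc_eq: "a \<in> G \<Longrightarrow> b \<in> G \<Longrightarrow> c \<in> G \<Longrightarrow> t \<in> G \<Longrightarrow>
   m (m a b) c = m (m a (m b c)) t \<Longrightarrow> associator G m a b c = t"
  unfolding associator_def
  by (rule the_equality) (auto intro: lcanc[of "m a (m b c)"])

lemma assoc_prop: "a \<in> G \<Longrightarrow> b \<in> G \<Longrightarrow> c \<in> G \<Longrightarrow>
   associator G m a b c \<in> G \<and> m (m a b) c = m (m a (m b c)) (associator G m a b c)"
proof -
  assume h: "a \<in> G" "b \<in> G" "c \<in> G"
  let ?t = "ldiv (m a (m b c)) (m (m a b) c)"
  have "associator G m a b c = ?t" using h by (intro assoc_eq) auto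
  thus ?thesis using h by simp
qed

lemma inner_hom: "automorphic G m e \<Longrightarrow> f \<in> mlt G m \<Longrightarrow> f e = e \<Longrightarrow> x \<in> G \<Longrightarrow> y \<in> G
   \<Longrightarrow> f (m x y) = m (f x) (f y)"
  unfolding automorphic_def inn_def by blast

lemma inner_fix: "t \<in> center G m e \<Longrightarrow> f \<in> mlt G m \<Longrightarrow> f e = e \<Longrightarrow> f t = t"
  unfolding center_def inn_def by blast

lemma cen_G: "t \<in> center G m e \<Longrightarrow> t \<in> G" unfolding center_def by blast

lemma cen_comm: assumes "t \<in> center G m e" "x \<in> G" shows "m x t = m t x"
proof -
  let ?f = "rtrans_inv G m x \<circ> (ltrans G m x \<circ> id)"
  have "?f \<in> mlt G m" using assms by (intro mlt.intros) auto
  moreover have "?f e = e" using assms by simp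
  ultimately have "?f t = t" using inner_fix assms(1) by blast
  hence "rdiv (m x t) x = t" using assms cen_G by simp
  thus ?thesis using assms cen_G by (metis cl rdiv_r)
qed

lemma cen_R: assumes "t \<in> center G m e" "x \<in> G" "y \<in> G" shows "m (m t x) y = m t (m x y)"
proof -
  let ?f = "rtrans_inv G m (m x y) \<circ> (rtrans G m y \<circ> (rtrans G m x \<circ> id))"
  have "?f \<in> mlt G m" using assms by (intro mlt.intros) auto
  moreover have "?f e = e" using assms by simp
  ultimately have "?f t = t" using inner_fix assms(1) by blast
  hence "rdiv (m (m t x) y) (m x y) = t" using assms cen_G by simp
  thus ?thesis using assms cen_G by (metis cl rdiv_r)
qed

lemma cen_B: assumes "t \<in> center G m e" "x \<in> G" "y \<in> G" shows "m x (m y t) = m (m x y) t"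
proof -
  let ?f = "ltrans_inv G m (m x y) \<circ> (ltrans G m x \<circ> (ltrans G m y \<circ> id))"
  have "?f \<in> mlt G m" using assms by (intro mlt.intros) auto
  moreover have "?f e = e" using assms by simp
  ultimately have "?f t = t" using inner_fix assms(1) by blast
  hence "ldiv (m x y) (m x (m y t)) = t" using assms cen_G by simp
  thus ?thesis using assms cen_G by (metis cl ldiv_r)
qed

lemma cen_A: assumes "t \<in> center G m e" "x \<in> G" "y \<in> G" shows "m (m x t) y = m (m x y) t"
  using assms cen_comm cen_R cen_G by (metis cl)

lemma cen_mul: assumes "automorphic G m e" "t \<in> center G m e" "s \<in> center G m e"
  shows "m t s \<in> center G m e"
proof -
  have G: "t \<in> G" "s \<in> G" using assms cen_G by auto
  have "f (m t s) = m t s" if "f \<in> inn G m e" for f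
  proof -
    have f: "f \<in> mlt G m" "f e = e" using that unfolding inn_def by auto
    have "f (m t s) = m (f t) (f s)" using inner_hom[OF assms(1) f G] .
    also have "f t = t" using inner_fix[OF assms(2) f] .
    also have "f s = s" using inner_fix[OF assms(3) f] .
    finally show ?thesis .
  qed
  thus ?thesis using G unfolding center_def by simp
qed

lemma cen_prod: assumes "t \<in> center G m e" "s \<in> center G m e" "x \<in> G" "y \<in> G"
  shows "m (m x t) (m y s) = m (m x y) (m t s)"
proof -
  have G: "t \<in> G" "s \<in> G" using assms cen_G by auto
  have "m (m x t) (m y s) = m (m (m x t) y) s" using assms G by (simp add: cen_B)
  also have "\<dots> = m (m (m x y) t) s" using cen_A[OF assms(1,3,4)] by simp
  also have "\<dots> = m (m x y) (m t s)" using assms G by (simp add: cen_B)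
  finally show ?thesis .
qed

end

theorem lemma2p4:
  fixes G :: "'a set" and m :: "'a \<Rightarrow> 'a \<Rightarrow> 'a" and e :: 'a and a b c d :: 'a
  assumes "loop G m e" and "automorphic G m e" and "nilpotency_class G m e 3"
    and "a \<in> G" and "b \<in> G" and "c \<in> G" and "d \<in> G"
  shows "(associator G m a c d \<in> center G m e \<and> associator G m b c d \<in> center G m e \<longrightarrow>
           associator G m (m a b) c d = m (associator G m a c d) (associator G m b c d))
       \<and> (associator G m a b d \<in> center G m e \<and> associator G m a c d \<in> center G m e \<longrightarrow>
           associator G m a (m b c) d = m (associator G m a b d) (associator G m a c d))
       \<and> (associator G m a b c \<in> center G m e \<and> associator G m a b d \<in> center G m e \<longrightarrow>
           associator G m a b (m c d) = m (associator G m a b c) (associator G m a b d))"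
proof -
  interpret lp G m e by (rule lp.intro) (rule assms(1))
  note A = assms(2) and G = assms(4-7)
  have I: "associator G m (m a b) c d = m (associator G m a c d) (associator G m b c d)"
    if c1: "associator G m a c d \<in> center G m e" and c2: "associator G m b c d \<in> center G m e"
  proof -
    define t1 where "t1 = associator G m a c d"
    define t2 where "t2 = associator G m b c d"
    have tc: "t1 \<in> center G m e" "t2 \<in> center G m e" using c1 c2 t1_def t2_def by auto
    have tG: "t1 \<in> G" "t2 \<in> G" using tc cen_G by auto
    have e1: "m (m a c) d = m (m a (m c d)) t1" unfolding t1_def using assoc_prop[of a c d] G by blast
    have e2: "m (m b c) d = m (m b (m c d)) t2" unfolding t2_def using assoc_prop[of b c d] G by blast
    define f where "f = rtrans_inv G m (m c d) \<circ> (rtrans G m d \<circ> (rtrans G m c \<circ> id))"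
    have fm: "f \<in> mlt G m" unfolding f_def using G by (intro mlt.intros) auto
    have fv: "f x = rdiv (m (m x c) d) (m c d)" if "x \<in> G" for x using that G f_def by simp
    have fe: "f e = e" using fv G by simp
    have fa: "f a = m a t1" using fv G e1 tG cen_A[OF tc(1), of a "m c d", symmetric] by simp
    have fb: "f b = m b t2" using fv G e2 tG cen_A[OF tc(2), of b "m c d", symmetric] by simp
    have fab: "f (m a b) = m (m a b) (m t1 t2)"
      using inner_hom[OF A fm fe G(1,2)] fa fb cen_prod[OF tc G(1,2)] by simp
    have T: "m t1 t2 \<in> center G m e" using cen_mul A tc by blast
    have "m (m (m a b) c) d = m (f (m a b)) (m c d)" using fv G by simp
    also have "\<dots> = m (m (m a b) (m c d)) (m t1 t2)" using fab cen_A[OF T] G by simp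
    finally have eq: "m (m (m a b) c) d = m (m (m a b) (m c d)) (m t1 t2)" .
    have TG': "m t1 t2 \<in> G" using tG by simp
    show ?thesis unfolding t1_def[symmetric] t2_def[symmetric]
      by (rule assoc_eq) (use G TG' eq in simp_all)
  qed
  have II: "associator G m a (m b c) d = m (associator G m a b d) (associator G m a c d)"
    if c1: "associator G m a b d \<in> center G m e" and c2: "associator G m a c d \<in> center G m e"
  proof -
    define t1 where "t1 = associator G m a b d"
    define t2 where "t2 = associator G m a c d"
    have tc: "t1 \<in> center G m e" "t2 \<in> center G m e" using c1 c2 t1_def t2_def by auto
    have tG: "t1 \<in> G" "t2 \<in> G" using tc cen_G by auto
    have e1: "m (m a b) d = m (m a (m b d)) t1" unfolding t1_def using assoc_prop[of a b d] G by blast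
    have e2: "m (m a c) d = m (m a (m c d)) t2" unfolding t2_def using assoc_prop[of a c d] G by blast
    define f where "f = rtrans_inv G m d \<circ> (ltrans_inv G m a \<circ> (rtrans G m d \<circ> (ltrans G m a \<circ> id)))"
    have fm: "f \<in> mlt G m" unfolding f_def using G by (intro mlt.intros) auto
    have fv: "f x = rdiv (ldiv a (m (m a x) d)) d" if "x \<in> G" for x using that G f_def by simp
    have fe: "f e = e" using fv G by (metis lid rid ldiv_l rdiv_l eG)
    have fb: "f b = m b t1" using fv G e1 tG cen_A[OF tc(1), of b d, symmetric] cen_B[OF tc(1), of a "m b d", symmetric] by simp
    have fc: "f c = m c t2" using fv G e2 tG cen_A[OF tc(2), of c d, symmetric] cen_B[OF tc(2), of a "m c d", symmetric] by simp
    have fbc: "f (m b c) = m (m b c) (m t1 t2)"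
      using inner_hom[OF A fm fe G(2,3)] fb fc cen_prod[OF tc G(2,3)] by simp
    have T: "m t1 t2 \<in> center G m e" using cen_mul A tc by blast
    have TG: "m t1 t2 \<in> G" using tG by simp
    have "m (m a (m b c)) d = m a (m (f (m b c)) d)" using fv G by simp
    also have "\<dots> = m (m a (m (m b c) d)) (m t1 t2)" using fbc cen_A[OF T] cen_B[OF T] G by simp
    finally have eq: "m (m a (m b c)) d = m (m a (m (m b c) d)) (m t1 t2)" .
    have TG': "m t1 t2 \<in> G" using tG by simp
    show ?thesis unfolding t1_def[symmetric] t2_def[symmetric]
      by (rule assoc_eq) (use G TG' eq in simp_all)
  qed
  have III: "associator G m a b (m c d) = m (associator G m a b c) (associator G m a b d)"
    if c1: "associator G m a b c \<in> center G m e" and c2: "associator G m a b d \<in> center G m e"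
  proof -
    define t1 where "t1 = associator G m a b c"
    define t2 where "t2 = associator G m a b d"
    have tc: "t1 \<in> center G m e" "t2 \<in> center G m e" using c1 c2 t1_def t2_def by auto
    have tG: "t1 \<in> G" "t2 \<in> G" using tc cen_G by auto
    have e1: "m (m a b) c = m (m a (m b c)) t1" unfolding t1_def using assoc_prop[of a b c] G by blast
    have e2: "m (m a b) d = m (m a (m b d)) t2" unfolding t2_def using assoc_prop[of a b d] G by blast
    define f where "f = ltrans_inv G m b \<circ> (ltrans_inv G m a \<circ> (ltrans G m (m a b) \<circ> id))"
    have fm: "f \<in> mlt G m" unfolding f_def using G by (intro mlt.intros) auto
    have fv: "f x = ldiv b (ldiv a (m (m a b) x))" if "x \<in> G" for x using that G f_def by simp
    have fe: "f e = e" using fv G by simp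
    have fc: "f c = m c t1" using fv G e1 tG cen_B[OF tc(1), of b c, symmetric] cen_B[OF tc(1), of a "m b c", symmetric] by simp
    have fd: "f d = m d t2" using fv G e2 tG cen_B[OF tc(2), of b d, symmetric] cen_B[OF tc(2), of a "m b d", symmetric] by simp
    have fcd: "f (m c d) = m (m c d) (m t1 t2)"
      using inner_hom[OF A fm fe G(3,4)] fc fd cen_prod[OF tc G(3,4)] by simp
    have T: "m t1 t2 \<in> center G m e" using cen_mul A tc by blast
    have TG: "m t1 t2 \<in> G" using tG by simp
    have "m (m a b) (m c d) = m a (m b (f (m c d)))" using fv G by simp
    also have "\<dots> = m (m a (m b (m c d))) (m t1 t2)" using fcd cen_B[OF T] G by simp
    finally have eq: "m (m a b) (m c d) = m (m a (m b (m c d))) (m t1 t2)" .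
    have TG': "m t1 t2 \<in> G" using tG by simp
    show ?thesis unfolding t1_def[symmetric] t2_def[symmetric]
      by (rule assoc_eq) (use G TG' eq in simp_all)
  qed
  show ?thesis using I II III by blast
qed

end
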